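(* Let $\mathcal F=(F,\rightarrowtail)$ be an argumentation framework and $A\subseteq F$. If $A$ is strongly tenable then $A$ is tenable, and if $A$ is tenable then $A$ is statically tenable. Moreover both implications are strict: there exist a finite argumentation framework and a set of arguments in it that is tenable but not strongly tenable, and there exist a finite argumentation framework and a set of arguments in it that is statically tenable but not tenable.
   Context: An argumentation framework (AF) $\mathcal F=(F,\rightarrowtail)$ consists of a (possibly infinite) set $F$ of arguments and a binary attack relation $\rightarrowtail\subseteq F\times F$. An argument $a$ attacks a set $B$ if $a\rightarrowtail b$ for some $b\in B$; a set $A$ attacks $x$ if some $a\in A$ attacks $x$. $A^+=\{x\in F:\exists a\in A,\ a\rightarrowtail x\}$. A set is conflict-free if none of its elements attacks one of its elements. For $A,B\subseteq F$, $A$ is as cogent as $B$, written $A\succeq B$, if $A$ is conflict-free and every $b\in B$ that attacks $A$ belongs to $A^+$. We write $B\succ A$ if $B\succeq A$ and not $A\succeq B$. Static tenability: $A\subseteq F$ is statically tenable if for every finite conflict-free $B\subseteq F$ there is a conflict-free $C\supseteq A$ with $C\succeq B$. Strong tenability game: a strong tenability dispute on $\mathcal F$ is a finite sequence $(X_0,\dots,X_n)$ of subsets of $F$, where even-indexed sets are moves of the Proponent (Pro) and odd-indexed sets are moves of the Opponent (Opp), such that (1) each $X_i$ is conflict-free; (2) $X_i\subseteq X_{i+2}$ whenever both are defined; (3) $X_1$ and each $X_{i+2}\setminus X_i$ are finite; (4) every Pro move $X_{2k}$ with $k\ge 1$ satisfies $X_{2k}\succeq X_{2k-1}$; (5) every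 Opp move $X_{2k+1}$ satisfies $X_{2k}\not\succeq X_{2k+1}$ (some element of $X_{2k+1}$ attacks $X_{2k}$ and is not in $X_{2k}^+$). Tenability game: a tenability dispute is defined identically except that (4) and (5) are replaced by (4') $X_{i+1}\succeq X_i$ for every $i$, and (5') every Opp move satisfies $X_{2k+1}\succ X_{2k}$. In either game, play starts with $X_0=A$ and players alternately extend the sequence so that it remains a dispute of the relevant kind. A dispute is concluded if it has no legal extension; a concluded dispute is won by the player who made its last move. A strategy for Pro assigns to each dispute ending with an Opp move a legal Pro reply; it is winning if every concluded dispute starting with $X_0=A$ in which Pro follows it is won by Pro (infinite plays count as wins for Pro). $A$ is strongly tenable (resp. tenable) if Pro has a winning strategy starting with $X_0=A$ in the strong tenability game (resp. tenability game). *)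

theory Defs
  imports Main
begin

text \<open>An argumentation framework is given by a carrier set F and an attack
relation att, a set of pairs (a,b) meaning a attacks b, with att a subset of F \<times> F.\<close>

definition conflict_free :: "('a \<times> 'a) set \<Rightarrow> 'a set \<Rightarrow> bool" where
  "conflict_free att X \<longleftrightarrow> (\<forall>a\<in>X. \<forall>b\<in>X. (a, b) \<notin> att)"

definition attacked_by :: "('a \<times> 'a) set \<Rightarrow> 'a set \<Rightarrow> 'a set" where
  "attacked_by att X = {x. \<exists>a\<in>X. (a, x) \<in> att}"

definition cogent :: "('a \<times> 'a) set \<Rightarrow> 'a set \<Rightarrow> 'a set \<Rightarrow> bool" where
  "cogent att A B \<longleftrightarrow> conflict_free att A \<and>
     (\<forall>b\<in>B. (\<exists>a\<in>A. (b, a) \<in> att) \<longrightarrow> b \<in> attacked_by att A)"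

definition strictly_cogent :: "('a \<times> 'a) set \<Rightarrow> 'a set \<Rightarrow> 'a set \<Rightarrow> bool" where
  "strictly_cogent att B A \<longleftrightarrow> cogent att B A \<and> \<not> cogent att A B"

definition statically_tenable :: "'a set \<Rightarrow> ('a \<times> 'a) set \<Rightarrow> 'a set \<Rightarrow> bool" where
  "statically_tenable F att A \<longleftrightarrow>
     (\<forall>B. B \<subseteq> F \<and> finite B \<and> conflict_free att B \<longrightarrow>
        (\<exists>C. A \<subseteq> C \<and> C \<subseteq> F \<and> conflict_free att C \<and> cogent att C B))"

text \<open>Conditions (1)-(3), common to both kinds of disputes. A dispute
(X_0,...,X_n) is the list [X_0,...,X_n]; even indices are Pro moves.\<close>
definition basic_dispute :: "'a set \<Rightarrow> ('a \<times> 'a) set \<Rightarrow> 'a set list \<Rightarrow> bool" where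
  "basic_dispute F att D \<longleftrightarrow> D \<noteq> [] \<and>
     (\<forall>i < length D. D ! i \<subseteq> F \<and> conflict_free att (D ! i)) \<and>
     (\<forall>i. i + 2 < length D \<longrightarrow> D ! i \<subseteq> D ! (i + 2) \<and> finite (D ! (i + 2) - D ! i)) \<and>
     (1 < length D \<longrightarrow> finite (D ! 1))"

definition strong_dispute :: "'a set \<Rightarrow> ('a \<times> 'a) set \<Rightarrow> 'a set list \<Rightarrow> bool" where
  "strong_dispute F att D \<longleftrightarrow> basic_dispute F att D \<and>
     (\<forall>k. 1 \<le> k \<and> 2 * k < length D \<longrightarrow> cogent att (D ! (2 * k)) (D ! (2 * k - 1))) \<and>
     (\<forall>k. 2 * k + 1 < length D \<longrightarrow> \<not> cogent att (D ! (2 * k)) (D ! (2 * k + 1)))"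

definition tenability_dispute :: "'a set \<Rightarrow> ('a \<times> 'a) set \<Rightarrow> 'a set list \<Rightarrow> bool" where
  "tenability_dispute F att D \<longleftrightarrow> basic_dispute F att D \<and>
     (\<forall>i. i + 1 < length D \<longrightarrow> cogent att (D ! (i + 1)) (D ! i)) \<and>
     (\<forall>k. 2 * k + 1 < length D \<longrightarrow> strictly_cogent att (D ! (2 * k + 1)) (D ! (2 * k)))"

definition follows :: "('a set list \<Rightarrow> 'a set) \<Rightarrow> 'a set list \<Rightarrow> bool" where
  "follows \<sigma> D \<longleftrightarrow> (\<forall>k. 1 \<le> k \<and> 2 * k < length D \<longrightarrow> D ! (2 * k) = \<sigma> (take (2 * k) D))"

text \<open>Pro has a winning strategy from A in the game whose disputes are given by
the predicate dispute: the play can start with X_0 = A, and at every dispute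
starting with A, consistent with sigma and ending with an Opp move (even length),
sigma yields a legal reply. Hence no concluded sigma-consistent play is won by Opp.\<close>
definition pro_wins :: "('a set list \<Rightarrow> bool) \<Rightarrow> 'a set \<Rightarrow> bool" where
  "pro_wins dispute A \<longleftrightarrow> dispute [A] \<and>
     (\<exists>\<sigma>. \<forall>D. dispute D \<and> hd D = A \<and> even (length D) \<and> follows \<sigma> D
              \<longrightarrow> dispute (D @ [\<sigma> D]))"

definition strongly_tenable :: "'a set \<Rightarrow> ('a \<times> 'a) set \<Rightarrow> 'a set \<Rightarrow> bool" where
  "strongly_tenable F att A \<longleftrightarrow> pro_wins (strong_dispute F att) A"

definition tenable :: "'a set \<Rightarrow> ('a \<times> 'a) set \<Rightarrow> 'a set \<Rightarrow> bool" where
  "tenable F att A \<longleftrightarrow> pro_wins (tenability_dispute F att) A"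

end

theory Submission
  imports Defs
begin


lemma all_snoc: "(\<forall>i. i < Suc n \<longrightarrow> P i) \<longleftrightarrow> (\<forall>i. i < n \<longrightarrow> P i) \<and> P n"
  using less_Suc_eq by auto

lemma basic_snoc:
  assumes "D \<noteq> []"
  shows "basic_dispute F att (D@[X]) \<longleftrightarrow> basic_dispute F att D \<and> X \<subseteq> F \<and> conflict_free att X
    \<and> (2 \<le> length D \<longrightarrow> D!(length D - 2) \<subseteq> X \<and> finite (X - D!(length D - 2)))
    \<and> (length D = 1 \<longrightarrow> finite X)"
proof -
  let ?n = "length D"
  let ?E = "D@[X]"
  have a: "(\<forall>i < length ?E. ?E ! i \<subseteq> F \<and> conflict_free att (?E ! i)) \<longleftrightarrow>
    (\<forall>i < ?n. D ! i \<subseteq> F \<and> conflict_free att (D ! i)) \<and> X \<subseteq> F \<and> conflict_free att X"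
    by (auto simp: all_snoc nth_append)
  have b: "(\<forall>i. i + 2 < length ?E \<longrightarrow> ?E ! i \<subseteq> ?E ! (i + 2) \<and> finite (?E ! (i + 2) - ?E ! i)) \<longleftrightarrow>
    (\<forall>i. i + 2 < ?n \<longrightarrow> D ! i \<subseteq> D ! (i + 2) \<and> finite (D ! (i + 2) - D ! i))
    \<and> (2 \<le> ?n \<longrightarrow> D!(?n - 2) \<subseteq> X \<and> finite (X - D!(?n - 2)))" (is "?L \<longleftrightarrow> ?R1 \<and> ?R2")
  proof
    assume L: ?L
    have "?R1"
    proof (intro allI impI)
      fix i assume "i + 2 < ?n" then show "D ! i \<subseteq> D ! (i + 2) \<and> finite (D ! (i + 2) - D ! i)"
        using L[rule_format, of i] by (simp add: nth_append)
    qed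
    moreover have ?R2
    proof
      assume "2 \<le> ?n"
      then obtain m where m: "?n = m + 2" by (metis le_add_diff_inverse2)
      then show "D!(?n - 2) \<subseteq> X \<and> finite (X - D!(?n - 2))"
        using L[rule_format, of m] by (simp add: nth_append)
    qed
    ultimately show "?R1 \<and> ?R2" by blast
  next
    assume R: "?R1 \<and> ?R2"
    show ?L
    proof (intro allI impI)
      fix i assume i: "i + 2 < length ?E"
      show "?E ! i \<subseteq> ?E ! (i + 2) \<and> finite (?E ! (i + 2) - ?E ! i)"
      proof (cases "i + 2 < ?n")
        case True then show ?thesis using R by (simp add: nth_append)
      next
        case False then have "i + 2 = ?n" "i = ?n - 2" using i by auto
        then show ?thesis using R by (simp add: nth_append)
      qed
    qed
  qed
  have c: "(1 < length ?E \<longrightarrow> finite (?E ! 1)) \<longleftrightarrow> (1 < ?n \<longrightarrow> finite (D ! 1)) \<and> (?n = 1 \<longrightarrow> finite X)"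
  proof -
    have "?n \<noteq> 0" using assms by simp
    then have "?n = 1 \<or> 1 < ?n" by linarith
    then show ?thesis by (auto simp: nth_append)
  qed
  show ?thesis unfolding basic_dispute_def using a b c assms by auto
qed

lemma basic_single: "basic_dispute F att [a] \<longleftrightarrow> a \<subseteq> F \<and> conflict_free att a"
  unfolding basic_dispute_def by auto

lemma ten_single: "tenability_dispute F att [a] \<longleftrightarrow> a \<subseteq> F \<and> conflict_free att a"
  unfolding tenability_dispute_def basic_dispute_def by auto

lemma strong_single: "strong_dispute F att [a] \<longleftrightarrow> a \<subseteq> F \<and> conflict_free att a"
  unfolding strong_dispute_def basic_dispute_def by auto

lemma ten_snoc:
  assumes "D \<noteq> []"
  shows "tenability_dispute F att (D@[X]) \<longleftrightarrow> tenability_dispute F att D \<and> X \<subseteq> F \<and> conflict_free att X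
    \<and> (2 \<le> length D \<longrightarrow> D!(length D - 2) \<subseteq> X \<and> finite (X - D!(length D - 2)))
    \<and> (length D = 1 \<longrightarrow> finite X) \<and> cogent att X (D ! (length D - 1))
    \<and> (odd (length D) \<longrightarrow> strictly_cogent att X (D ! (length D - 1)))"
proof -
  let ?n = "length D"
  let ?E = "D@[X]"
  have n: "?n \<ge> 1" using assms by (cases D) auto
  have a: "(\<forall>i. i + 1 < length ?E \<longrightarrow> cogent att (?E ! (i + 1)) (?E ! i)) \<longleftrightarrow>
     (\<forall>i. i + 1 < ?n \<longrightarrow> cogent att (D ! (i + 1)) (D ! i)) \<and> cogent att X (D ! (?n - 1))"
    (is "?L \<longleftrightarrow> ?R1 \<and> ?R2")
  proof
    assume L: ?L
    have ?R1
    proof (intro allI impI)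
      fix i assume "i + 1 < ?n" then show "cogent att (D ! (i + 1)) (D ! i)"
        using L[rule_format, of i] by (simp add: nth_append)
    qed
    moreover have ?R2
    proof -
      obtain m where m: "?n = m + 1" using n by (metis le_add_diff_inverse2)
      then show ?R2 using L[rule_format, of m] by (simp add: nth_append)
    qed
    ultimately show "?R1 \<and> ?R2" by blast
  next
    assume R: "?R1 \<and> ?R2"
    show ?L
    proof (intro allI impI)
      fix i assume i: "i + 1 < length ?E"
      show "cogent att (?E ! (i + 1)) (?E ! i)"
      proof (cases "i + 1 < ?n")
        case True then show ?thesis using R by (simp add: nth_append)
      next
        case False then have "i + 1 = ?n" "i = ?n - 1" using i by auto
        then show ?thesis using R by (simp add: nth_append)
      qed
    qed
  qed
  have b: "(\<forall>k. 2 * k + 1 < length ?E \<longrightarrow> strictly_cogent att (?E ! (2 * k + 1)) (?E ! (2 * k))) \<longleftrightarrow>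
     (\<forall>k. 2 * k + 1 < ?n \<longrightarrow> strictly_cogent att (D ! (2 * k + 1)) (D ! (2 * k)))
     \<and> (odd ?n \<longrightarrow> strictly_cogent att X (D ! (?n - 1)))"
    (is "?L \<longleftrightarrow> ?R1 \<and> ?R2")
  proof
    assume L: ?L
    have ?R1
    proof (intro allI impI)
      fix k assume "2 * k + 1 < ?n" then show "strictly_cogent att (D ! (2 * k + 1)) (D ! (2 * k))"
        using L[rule_format, of k] by (simp add: nth_append)
    qed
    moreover have ?R2
    proof
      assume "odd ?n"
      then obtain k where k: "?n = 2 * k + 1" by (metis oddE)
      then show "strictly_cogent att X (D ! (?n - 1))" using L[rule_format, of k] by (simp add: nth_append)
    qed
    ultimately show "?R1 \<and> ?R2" by blast
  next
    assume R: "?R1 \<and> ?R2"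
    show ?L
    proof (intro allI impI)
      fix k assume i: "2 * k + 1 < length ?E"
      show "strictly_cogent att (?E ! (2 * k + 1)) (?E ! (2 * k))"
      proof (cases "2 * k + 1 < ?n")
        case True then show ?thesis using R by (simp add: nth_append)
      next
        case False then have eq: "2 * k + 1 = ?n" using i by auto
        then have "2 * k = ?n - 1" "\<not> 2 * k + 1 < ?n" "2 * k < ?n" by auto
        moreover have "odd ?n" by (subst eq[symmetric]) simp
        ultimately show ?thesis using R by (simp add: nth_append)
      qed
    qed
  qed
  show ?thesis unfolding tenability_dispute_def using a b basic_snoc[OF assms] by blast
qed

lemma strong_snoc:
  assumes "D \<noteq> []"
  shows "strong_dispute F att (D@[X]) \<longleftrightarrow> strong_dispute F att D \<and> X \<subseteq> F \<and> conflict_free att X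
    \<and> (2 \<le> length D \<longrightarrow> D!(length D - 2) \<subseteq> X \<and> finite (X - D!(length D - 2)))
    \<and> (length D = 1 \<longrightarrow> finite X)
    \<and> (even (length D) \<longrightarrow> cogent att X (D ! (length D - 1)))
    \<and> (odd (length D) \<longrightarrow> \<not> cogent att (D ! (length D - 1)) X)"
proof -
  let ?n = "length D"
  let ?E = "D@[X]"
  have n: "?n \<ge> 1" using assms by (cases D) auto
  have a: "(\<forall>k. 1 \<le> k \<and> 2 * k < length ?E \<longrightarrow> cogent att (?E ! (2 * k)) (?E ! (2 * k - 1))) \<longleftrightarrow>
     (\<forall>k. 1 \<le> k \<and> 2 * k < ?n \<longrightarrow> cogent att (D ! (2 * k)) (D ! (2 * k - 1)))
     \<and> (even ?n \<longrightarrow> cogent att X (D ! (?n - 1)))"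
    (is "?L \<longleftrightarrow> ?R1 \<and> ?R2")
  proof
    assume L: ?L
    have ?R1
    proof (intro allI impI)
      fix k assume k: "1 \<le> k \<and> 2 * k < ?n"
      then have "2 * k - 1 < ?n" by auto
      then show "cogent att (D ! (2 * k)) (D ! (2 * k - 1))"
        using L[rule_format, of k] k by (simp add: nth_append)
    qed
    moreover have ?R2
    proof
      assume "even ?n"
      then obtain k where k: "?n = 2 * k" by (metis evenE)
      then have "1 \<le> k" using n by auto
      then show "cogent att X (D ! (?n - 1))" using L[rule_format, of k] k by (simp add: nth_append)
    qed
    ultimately show "?R1 \<and> ?R2" by blast
  next
    assume R: "?R1 \<and> ?R2"
    show ?L
    proof (intro allI impI)
      fix k assume i: "1 \<le> k \<and> 2 * k < length ?E"
      show "cogent att (?E ! (2 * k)) (?E ! (2 * k - 1))"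
      proof (cases "2 * k < ?n")
        case True then have "2 * k - 1 < ?n" by auto
        then show ?thesis using R i True by (simp add: nth_append)
      next
        case False then have eq: "2 * k = ?n" using i by auto
        then have "2 * k - 1 = ?n - 1" "2 * k - 1 < ?n" using i by auto
        moreover have "even ?n" by (subst eq[symmetric]) simp
        ultimately show ?thesis using R i \<open>2 * k = ?n\<close> by (simp add: nth_append)
      qed
    qed
  qed
  have b: "(\<forall>k. 2 * k + 1 < length ?E \<longrightarrow> \<not> cogent att (?E ! (2 * k)) (?E ! (2 * k + 1))) \<longleftrightarrow>
     (\<forall>k. 2 * k + 1 < ?n \<longrightarrow> \<not> cogent att (D ! (2 * k)) (D ! (2 * k + 1)))
     \<and> (odd ?n \<longrightarrow> \<not> cogent att (D ! (?n - 1)) X)"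
    (is "?L \<longleftrightarrow> ?R1 \<and> ?R2")
  proof
    assume L: ?L
    have ?R1
    proof (intro allI impI)
      fix k assume "2 * k + 1 < ?n" then show "\<not> cogent att (D ! (2 * k)) (D ! (2 * k + 1))"
        using L[rule_format, of k] by (simp add: nth_append)
    qed
    moreover have ?R2
    proof
      assume "odd ?n"
      then obtain k where k: "?n = 2 * k + 1" by (metis oddE)
      then show "\<not> cogent att (D ! (?n - 1)) X" using L[rule_format, of k] by (simp add: nth_append)
    qed
    ultimately show "?R1 \<and> ?R2" by blast
  next
    assume R: "?R1 \<and> ?R2"
    show ?L
    proof (intro allI impI)
      fix k assume i: "2 * k + 1 < length ?E"
      show "\<not> cogent att (?E ! (2 * k)) (?E ! (2 * k + 1))"
      proof (cases "2 * k + 1 < ?n")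
        case True then show ?thesis using R by (simp add: nth_append)
      next
        case False then have eq: "2 * k + 1 = ?n" using i by auto
        then have "2 * k = ?n - 1" "\<not> 2 * k + 1 < ?n" "2 * k < ?n" by auto
        moreover have "odd ?n" by (subst eq[symmetric]) simp
        ultimately show ?thesis using R by (simp add: nth_append)
      qed
    qed
  qed
  show ?thesis unfolding strong_dispute_def using a b basic_snoc[OF assms] by blast
qed

lemma ten2: "tenability_dispute F att [a,b] \<longleftrightarrow> a\<subseteq>F \<and> conflict_free att a \<and> b\<subseteq>F \<and> conflict_free att b
   \<and> finite b \<and> cogent att b a \<and> strictly_cogent att b a"
  using ten_snoc[of "[a]" F att b] by (simp add: ten_single)

lemma strong2: "strong_dispute F att [a,b] \<longleftrightarrow> a\<subseteq>F \<and> conflict_free att a \<and> b\<subseteq>F \<and> conflict_free att b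
   \<and> finite b \<and> \<not> cogent att a b"
  using strong_snoc[of "[a]" F att b] by (simp add: strong_single)

lemma ten3: "tenability_dispute F att [a,b,c] \<longleftrightarrow> tenability_dispute F att [a,b] \<and> c\<subseteq>F \<and> conflict_free att c \<and> a \<subseteq> c \<and> finite (c - a)
   \<and> cogent att c b"
  using ten_snoc[of "[a,b]" F att c] by simp

lemma ten4: "tenability_dispute F att [a,b,c,d] \<longleftrightarrow> tenability_dispute F att [a,b,c] \<and> d\<subseteq>F \<and> conflict_free att d \<and> b \<subseteq> d \<and> finite (d - b)
   \<and> cogent att d c \<and> strictly_cogent att d c"
  using ten_snoc[of "[a,b,c]" F att d] by simp

lemma ten5: "tenability_dispute F att [a,b,c,d,e] \<longleftrightarrow> tenability_dispute F att [a,b,c,d] \<and> e\<subseteq>F \<and> conflict_free att e \<and> c \<subseteq> e \<and> finite (e - c)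
   \<and> cogent att e d"
  using ten_snoc[of "[a,b,c,d]" F att e] by simp

lemma strong3: "strong_dispute F att [a,b,c] \<longleftrightarrow> strong_dispute F att [a,b] \<and> c\<subseteq>F \<and> conflict_free att c \<and> a \<subseteq> c \<and> finite (c - a)
   \<and> cogent att c b"
  using strong_snoc[of "[a,b]" F att c] by simp

lemma strong4: "strong_dispute F att [a,b,c,d] \<longleftrightarrow> strong_dispute F att [a,b,c] \<and> d\<subseteq>F \<and> conflict_free att d \<and> b \<subseteq> d \<and> finite (d - b)
   \<and> \<not> cogent att c d"
  using strong_snoc[of "[a,b,c]" F att d] by simp

lemma strong5: "strong_dispute F att [a,b,c,d,e] \<longleftrightarrow> strong_dispute F att [a,b,c,d] \<and> e\<subseteq>F \<and> conflict_free att e \<and> c \<subseteq> e \<and> finite (e - c)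
   \<and> cogent att e d"
  using strong_snoc[of "[a,b,c,d]" F att e] by simp


lemma ten_imp_strong:
  assumes "tenability_dispute F att D" shows "strong_dispute F att D"
proof -
  have b: "basic_dispute F att D" and c: "\<forall>i. i + 1 < length D \<longrightarrow> cogent att (D ! (i + 1)) (D ! i)"
   and s: "\<forall>k. 2 * k + 1 < length D \<longrightarrow> strictly_cogent att (D ! (2 * k + 1)) (D ! (2 * k))"
    using assms unfolding tenability_dispute_def by auto
  have "cogent att (D ! (2 * k)) (D ! (2 * k - 1))" if "1 \<le> k" "2 * k < length D" for k
  proof -
    have "2*k - 1 + 1 < length D" "2*k-1+1 = 2*k" using that by auto
    then show ?thesis using c by metis
  qed
  moreover have "\<not> cogent att (D ! (2 * k)) (D ! (2 * k + 1))" if "2 * k + 1 < length D" for k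
    using s that unfolding strictly_cogent_def by auto
  ultimately show ?thesis using b unfolding strong_dispute_def by auto
qed

lemma strong_ext_ten:
  assumes st: "strong_dispute F att (D @ [X])" and t: "tenability_dispute F att D"
    and ev: "even (length D)"
  shows "tenability_dispute F att (D @ [X])"
proof -
  have ne: "D \<noteq> []" using t unfolding tenability_dispute_def basic_dispute_def by auto
  obtain m where m: "length D = 2 * m" using ev by auto
  have m1: "1 \<le> m" using ne m by (cases m) auto
  have b: "basic_dispute F att (D @ [X])" using st unfolding strong_dispute_def by auto
  have c: "\<forall>i. i + 1 < length D \<longrightarrow> cogent att (D ! (i + 1)) (D ! i)"
   and s: "\<forall>k. 2 * k + 1 < length D \<longrightarrow> strictly_cogent att (D ! (2 * k + 1)) (D ! (2 * k))"
    using t unfolding tenability_dispute_def by auto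
  have sc: "cogent att ((D@[X]) ! (2 * m)) ((D@[X]) ! (2 * m - 1))"
    using st m1 m unfolding strong_dispute_def by auto
  have "cogent att ((D@[X]) ! (i + 1)) ((D@[X]) ! i)" if "i + 1 < length (D@[X])" for i
  proof (cases "i + 1 < length D")
    case True
    then show ?thesis using c by (simp add: nth_append)
  next
    case False
    then have "i + 1 = 2 * m" "i = 2*m - 1" using that m by auto
    then show ?thesis using sc by simp
  qed
  moreover have "strictly_cogent att ((D@[X]) ! (2 * k + 1)) ((D@[X]) ! (2 * k))"
    if "2 * k + 1 < length (D@[X])" for k
  proof -
    have "2 * k + 1 < length D" using that m by auto
    then show ?thesis using s by (simp add: nth_append)
  qed
  ultimately show ?thesis using b unfolding tenability_dispute_def by auto
qed

lemma part1:
  assumes "strongly_tenable F att A" shows "tenable F att A"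
proof -
  have d0: "strong_dispute F att [A]" and ex: "\<exists>\<sigma>. \<forall>D. strong_dispute F att D \<and> hd D = A \<and> even (length D) \<and> follows \<sigma> D
              \<longrightarrow> strong_dispute F att (D @ [\<sigma> D])"
    using assms unfolding strongly_tenable_def pro_wins_def by auto
  obtain \<sigma> where \<sigma>: "\<forall>D. strong_dispute F att D \<and> hd D = A \<and> even (length D) \<and> follows \<sigma> D
              \<longrightarrow> strong_dispute F att (D @ [\<sigma> D])" using ex by blast
  have "tenability_dispute F att [A]"
    using d0 unfolding strong_dispute_def tenability_dispute_def by auto
  moreover have "\<forall>D. tenability_dispute F att D \<and> hd D = A \<and> even (length D) \<and> follows \<sigma> D
              \<longrightarrow> tenability_dispute F att (D @ [\<sigma> D])"
    using \<sigma> ten_imp_strong strong_ext_ten by blast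
  ultimately show ?thesis unfolding tenable_def pro_wins_def by blast
qed

lemma part2:
  assumes "tenable F att A" and AF: "A \<subseteq> F" shows "statically_tenable F att A"
  unfolding statically_tenable_def
proof (intro allI impI)
  fix B assume B: "B \<subseteq> F \<and> finite B \<and> conflict_free att B"
  have d0: "tenability_dispute F att [A]" and ex: "\<exists>\<sigma>. \<forall>D. tenability_dispute F att D \<and> hd D = A \<and> even (length D) \<and> follows \<sigma> D
              \<longrightarrow> tenability_dispute F att (D @ [\<sigma> D])"
    using assms unfolding tenable_def pro_wins_def by auto
  obtain \<sigma> where \<sigma>: "\<forall>D. tenability_dispute F att D \<and> hd D = A \<and> even (length D) \<and> follows \<sigma> D
              \<longrightarrow> tenability_dispute F att (D @ [\<sigma> D])" using ex by blast
  have cfA: "conflict_free att A" using d0 unfolding tenability_dispute_def basic_dispute_def by auto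
  define X where "X = B - attacked_by att A"
  have cfX: "conflict_free att X" using B unfolding X_def conflict_free_def by auto
  have XF: "X \<subseteq> F" "finite X" using B unfolding X_def by auto
  show "\<exists>C. A \<subseteq> C \<and> C \<subseteq> F \<and> conflict_free att C \<and> cogent att C B"
  proof (cases "cogent att A X")
    case True
    have "cogent att A B" using True cfA unfolding cogent_def X_def by auto
    then show ?thesis using AF cfA by blast
  next
    case False
    have cXA: "cogent att X A" using cfX unfolding cogent_def X_def attacked_by_def by auto
    have D: "tenability_dispute F att [A, X]"
      using d0 cXA False cfX XF unfolding tenability_dispute_def basic_dispute_def strictly_cogent_def
      by (auto simp: less_Suc_eq nth_Cons')
    have fol: "follows \<sigma> [A, X]" unfolding follows_def by auto
    have D3: "tenability_dispute F att [A, X, \<sigma> [A, X]]" using \<sigma> D fol by auto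
    define Y where "Y = \<sigma> [A, X]"
    have D3': "tenability_dispute F att [A, X, Y]" using D3 Y_def by simp
    have b: "\<forall>i < length [A,X,Y]. [A,X,Y] ! i \<subseteq> F \<and> conflict_free att ([A,X,Y] ! i)"
      "\<forall>i. i + 2 < length [A,X,Y] \<longrightarrow> [A,X,Y] ! i \<subseteq> [A,X,Y] ! (i + 2)"
      "\<forall>i. i + 1 < length [A,X,Y] \<longrightarrow> cogent att ([A,X,Y] ! (i + 1)) ([A,X,Y] ! i)"
      using D3' unfolding tenability_dispute_def basic_dispute_def by auto
    have "A \<subseteq> Y" using spec[OF b(2), of 0] by simp
    moreover have "Y \<subseteq> F \<and> conflict_free att Y" using spec[OF b(1), of 2] by simp
    moreover have "cogent att Y X" using spec[OF b(3), of 1] by simp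
    moreover have "cogent att Y B"
    proof -
      have "A \<subseteq> Y" by fact
      then have "attacked_by att A \<subseteq> attacked_by att Y" unfolding attacked_by_def by auto
      then show ?thesis using \<open>cogent att Y X\<close> unfolding cogent_def X_def by blast
    qed
    ultimately show ?thesis by blast
  qed
qed


lemma cf_no: "conflict_free att X \<Longrightarrow> (a,b) \<in> att \<Longrightarrow> a \<in> X \<Longrightarrow> b \<in> X \<Longrightarrow> False"
  unfolding conflict_free_def by blast

lemma cog_need: "cogent att X Y \<Longrightarrow> b \<in> Y \<Longrightarrow> (b,a) \<in> att \<Longrightarrow> a \<in> X \<Longrightarrow> \<exists>c\<in>X. (c,b) \<in> att"
  unfolding cogent_def attacked_by_def by blast

definition att4 :: "(nat \<times> nat) set" where
  "att4 = {(1,2),(1,3),(1,5),(2,0),(3,2),(3,4),(4,1),(4,5),(5,3)}"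

lemma ex4_static: "statically_tenable {0..5} att4 {0}"
  unfolding statically_tenable_def
proof (intro allI impI)
  fix B :: "nat set" assume B: "B \<subseteq> {0..5} \<and> finite B \<and> conflict_free att4 B"
  show "\<exists>C. {0} \<subseteq> C \<and> C \<subseteq> {0..5} \<and> conflict_free att4 C \<and> cogent att4 C B"
  proof (cases "2 \<in> B")
    case False
    have "cogent att4 {0} B" using False unfolding cogent_def att4_def conflict_free_def attacked_by_def by auto
    moreover have "conflict_free att4 {0}" unfolding att4_def conflict_free_def by auto
    ultimately show ?thesis by (intro exI[of _ "{0}"] conjI) (auto simp del: insert_subset)
  next
    case True
    have n: "0 \<notin> B" "1 \<notin> B" "3 \<notin> B" using B True cf_no[of att4 B] unfolding att4_def by blast+
    show ?thesis
    proof (cases "4 \<in> B")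
      case False
      have "cogent att4 {0,1} B" using False n unfolding cogent_def att4_def conflict_free_def attacked_by_def by auto
      moreover have "conflict_free att4 {0,1}" unfolding att4_def conflict_free_def by auto
      ultimately show ?thesis by (intro exI[of _ "{0,1}"] conjI) (auto simp del: insert_subset)
    next
      case True
      have "5 \<notin> B" using B True cf_no[of att4 B] unfolding att4_def by blast
      then have "cogent att4 {0,3} B" using True n unfolding cogent_def att4_def conflict_free_def attacked_by_def by auto
      moreover have "conflict_free att4 {0,3}" unfolding att4_def conflict_free_def by auto
      ultimately show ?thesis by (intro exI[of _ "{0,3}"] conjI) (auto simp del: insert_subset)
    qed
  qed
qed

lemma ex4_not_tenable: "\<not> tenable {0..5} att4 {0}"
proof
  assume "tenable {0..5} att4 {0}"
  then obtain \<sigma> where \<sigma>: "\<forall>D. tenability_dispute {0..5} att4 D \<and> hd D = {0} \<and> even (length D) \<and> follows \<sigma> D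
              \<longrightarrow> tenability_dispute {0..5} att4 (D @ [\<sigma> D])"
    unfolding tenable_def pro_wins_def by blast
  let ?F = "{0..5::nat}"
  have cf0: "conflict_free att4 {0}" unfolding att4_def conflict_free_def by auto
  have D1: "tenability_dispute ?F att4 [{0},{2}]"
    unfolding ten2 strictly_cogent_def using cf0
    unfolding att4_def conflict_free_def cogent_def attacked_by_def by auto
  have "follows \<sigma> [{0},{2}]" unfolding follows_def by auto
  then have "tenability_dispute ?F att4 [{0},{2},\<sigma> [{0},{2}]]" using \<sigma> D1 by auto
  then obtain X where X: "X = \<sigma> [{0},{2}]" and D2: "tenability_dispute ?F att4 [{0},{2},X]" by blast
  have X1: "0 \<in> X" "conflict_free att4 X" "cogent att4 X {2}" "X \<subseteq> ?F" using D2 unfolding ten3 by auto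
  from cog_need[OF X1(3), of 2 0] X1(1) obtain c where c: "c \<in> X" "(c,2) \<in> att4"
    unfolding att4_def by auto
  have c13: "c = 1 \<or> c = 3" using c(2) unfolding att4_def by auto
  define Y where "Y = (if c = 1 then {2,4} else {2,5::nat})"
  have n13: "\<not> (1 \<in> X \<and> 3 \<in> X)" using cf_no[OF X1(2), of 1 3] unfolding att4_def by auto
  have n34: "\<not> (3 \<in> X \<and> 4 \<in> X)" using cf_no[OF X1(2), of 3 4] unfolding att4_def by auto
  have n14: "\<not> (1 \<in> X \<and> 5 \<in> X)" using cf_no[OF X1(2), of 1 5] unfolding att4_def by auto
  have n41: "\<not> (4 \<in> X \<and> 1 \<in> X)" using cf_no[OF X1(2), of 4 1] unfolding att4_def by auto
  have n53: "\<not> (5 \<in> X \<and> 3 \<in> X)" using cf_no[OF X1(2), of 5 3] unfolding att4_def by auto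
  have n20: "2 \<notin> X" using cf_no[OF X1(2), of 2 0] X1(1) unfolding att4_def by auto
  have att4_in: "(a,b) \<in> att4 \<longleftrightarrow> (a,b) \<in> {(1,2),(1,3),(1,5),(2,0),(3,2),(3,4),(4,1),(4,5),(5,3)}" for a b
    unfolding att4_def by simp
  have YF: "Y \<subseteq> ?F" "{2} \<subseteq> Y" "finite (Y - {2})" unfolding Y_def by auto
  have Ycf: "conflict_free att4 Y" unfolding Y_def conflict_free_def att4_def by auto
  have Ycog: "cogent att4 Y X"
    unfolding cogent_def
  proof (intro conjI Ycf ballI impI)
    fix b assume b: "b \<in> X" "\<exists>a\<in>Y. (b, a) \<in> att4"
    then have "b = 1 \<or> b = 3 \<or> b = 4 \<or> b = 2" unfolding Y_def att4_def by (auto split: if_splits)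
    then show "b \<in> attacked_by att4 Y" using b c13 c n13 n34 n20 unfolding Y_def attacked_by_def att4_def
      by (auto split: if_splits)
  qed
  have Yncog: "\<not> cogent att4 X Y"
  proof
    assume h: "cogent att4 X Y"
    show False
    proof (cases "c = 1")
      case True
      then have "4 \<in> Y" unfolding Y_def by simp
      from cog_need[OF h this, of 1] c True obtain d where "d \<in> X" "(d,4) \<in> att4" by (auto simp: att4_def)
      then have "d = 3" unfolding att4_def by auto
      then show False using n13 c True \<open>d \<in> X\<close> by auto
    next
      case False
      then have "5 \<in> Y" "c = 3" using c13 unfolding Y_def by auto
      from cog_need[OF h this(1), of 3] c \<open>c = 3\<close> obtain d where "d \<in> X" "(d,5) \<in> att4" by (auto simp: att4_def)
      then have "d = 1 \<or> d = 4" unfolding att4_def by auto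
      then show False using n13 n34 c \<open>c = 3\<close> \<open>d \<in> X\<close> by auto
    qed
  qed
  have D3: "tenability_dispute ?F att4 [{0},{2},X,Y]"
    unfolding ten4 strictly_cogent_def using D2 YF Ycf Ycog Yncog by auto
  have "follows \<sigma> [{0},{2},X,Y]" unfolding follows_def
  proof (intro allI impI)
    fix k :: nat assume "1 \<le> k \<and> 2 * k < length [{0},{2},X,Y]"
    then have "k = 1" by auto
    then show "[{0},{2},X,Y] ! (2 * k) = \<sigma> (take (2 * k) [{0},{2},X,Y])" using X by simp
  qed
  then have "tenability_dispute ?F att4 ([{0},{2},X,Y] @ [\<sigma> [{0},{2},X,Y]])"
    using \<sigma>[rule_format, of "[{0},{2},X,Y]"] D3 by simp
  then obtain Z where Z: "tenability_dispute ?F att4 [{0},{2},X,Y,Z]" by auto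
  have Z1: "X \<subseteq> Z" "conflict_free att4 Z" "cogent att4 Z Y" using Z unfolding ten5 by auto
  show False
  proof (cases "c = 1")
    case True
    then have "1 \<in> Z" "4 \<in> Y" using c Z1 Y_def by auto
    from cog_need[OF Z1(3) this(2), of 1] this obtain d where "d \<in> Z" "(d,4) \<in> att4" unfolding att4_def by auto
    then have "3 \<in> Z" unfolding att4_def by auto
    then show False using cf_no[OF Z1(2), of 1 3] \<open>1 \<in> Z\<close> unfolding att4_def by auto
  next
    case False
    then have "3 \<in> Z" "5 \<in> Y" using c c13 Z1 Y_def by auto
    from cog_need[OF Z1(3) this(2), of 3] this obtain d where "d \<in> Z" "(d,5) \<in> att4" unfolding att4_def by auto
    then have "d = 1 \<or> d = 4" unfolding att4_def by auto
    then show False using cf_no[OF Z1(2), of 1 3] cf_no[OF Z1(2), of 3 4] \<open>3 \<in> Z\<close> \<open>d \<in> Z\<close> unfolding att4_def by auto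
  qed
qed


lemma ten_prefix: "tenability_dispute F att (D @ E) \<Longrightarrow> D \<noteq> [] \<Longrightarrow> tenability_dispute F att D"
proof (induction E rule: rev_induct)
  case Nil then show ?case by simp
next
  case (snoc x xs)
  have "tenability_dispute F att ((D @ xs) @ [x])" using snoc.prems by simp
  then have "tenability_dispute F att (D @ xs)" using ten_snoc[of "D @ xs" F att x] snoc.prems by simp
  then show ?case using snoc by blast
qed

definition att3 :: "(nat \<times> nat) set" where
  "att3 = {(1,2),(1,4),(1,3),(2,4),(2,5),(4,0),(3,0),(3,5),(5,1)}"

lemma ex3_not_strong: "\<not> strongly_tenable {0..5} att3 {0}"
proof
  assume "strongly_tenable {0..5} att3 {0}"
  then obtain \<sigma> where \<sigma>: "\<forall>D. strong_dispute {0..5} att3 D \<and> hd D = {0} \<and> even (length D) \<and> follows \<sigma> D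
              \<longrightarrow> strong_dispute {0..5} att3 (D @ [\<sigma> D])"
    unfolding strongly_tenable_def pro_wins_def by blast
  let ?F = "{0..5::nat}"
  have cf0: "conflict_free att3 {0}" unfolding att3_def conflict_free_def by auto
  have D1: "strong_dispute ?F att3 [{0},{4}]"
    unfolding strong2 using cf0
    unfolding att3_def conflict_free_def cogent_def attacked_by_def by auto
  have "follows \<sigma> [{0},{4}]" unfolding follows_def by auto
  then have "strong_dispute ?F att3 ([{0},{4}] @ [\<sigma> [{0},{4}]])" using \<sigma>[rule_format, of "[{0},{4}]"] D1 by simp
  then obtain X where X: "X = \<sigma> [{0},{4}]" and D2: "strong_dispute ?F att3 [{0},{4},X]" by auto
  have X1: "0 \<in> X" "conflict_free att3 X" "cogent att3 X {4}" using D2 unfolding strong3 by auto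
  from cog_need[OF X1(3), of 4 0] X1(1) obtain c where c: "c \<in> X" "(c,4) \<in> att3"
    unfolding att3_def by auto
  have c12: "c = 1 \<or> c = 2" using c(2) unfolding att3_def by auto
  have n12: "\<not> (1 \<in> X \<and> 2 \<in> X)" using cf_no[OF X1(2), of 1 2] unfolding att3_def by auto
  have n30: "3 \<notin> X" using cf_no[OF X1(2), of 3 0] X1(1) unfolding att3_def by auto
  define Y where "Y = (if c = 1 then {4,5} else {4,3::nat})"
  have YF: "Y \<subseteq> ?F" "{4} \<subseteq> Y" "finite (Y - {4})" unfolding Y_def by auto
  have Ycf: "conflict_free att3 Y" unfolding Y_def conflict_free_def att3_def by auto
  have Yncog: "\<not> cogent att3 X Y"
  proof
    assume h: "cogent att3 X Y"
    show False
    proof (cases "c = 1")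
      case True
      then have "5 \<in> Y" unfolding Y_def by simp
      from cog_need[OF h this, of 1] c True obtain d where "d \<in> X" "(d,5) \<in> att3" by (auto simp: att3_def)
      then have "d = 2 \<or> d = 3" unfolding att3_def by auto
      then show False using n12 n30 c True \<open>d \<in> X\<close> by auto
    next
      case False
      then have "3 \<in> Y" "c = 2" using c12 unfolding Y_def by auto
      from cog_need[OF h this(1), of 0] X1(1) obtain d where "d \<in> X" "(d,3) \<in> att3" by (auto simp: att3_def)
      then have "d = 1" unfolding att3_def by auto
      then show False using n12 c \<open>c = 2\<close> \<open>d \<in> X\<close> by auto
    qed
  qed
  have D3: "strong_dispute ?F att3 [{0},{4},X,Y]"
    unfolding strong4 using D2 YF Ycf Yncog by auto
  have "follows \<sigma> [{0},{4},X,Y]" unfolding follows_def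
  proof (intro allI impI)
    fix k :: nat assume "1 \<le> k \<and> 2 * k < length [{0},{4},X,Y]"
    then have "k = 1" by auto
    then show "[{0},{4},X,Y] ! (2 * k) = \<sigma> (take (2 * k) [{0},{4},X,Y])" using X by simp
  qed
  then have "strong_dispute ?F att3 ([{0},{4},X,Y] @ [\<sigma> [{0},{4},X,Y]])"
    using \<sigma>[rule_format, of "[{0},{4},X,Y]"] D3 by simp
  then obtain Z where Z: "strong_dispute ?F att3 [{0},{4},X,Y,Z]" by auto
  have Z1: "X \<subseteq> Z" "conflict_free att3 Z" "cogent att3 Z Y" using Z unfolding strong5 by auto
  show False
  proof (cases "c = 1")
    case True
    then have "1 \<in> Z" "5 \<in> Y" using c Z1 Y_def by auto
    from cog_need[OF Z1(3) this(2), of 1] this obtain d where "d \<in> Z" "(d,5) \<in> att3" unfolding att3_def by auto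
    then have "d = 2 \<or> d = 3" unfolding att3_def by auto
    then show False using cf_no[OF Z1(2), of 1 2] cf_no[OF Z1(2), of 3 0] \<open>1 \<in> Z\<close> \<open>d \<in> Z\<close> X1(1) Z1(1)
      unfolding att3_def by auto
  next
    case False
    then have "2 \<in> Z" "3 \<in> Y" "0 \<in> Z" using c c12 Z1 Y_def X1(1) by auto
    from cog_need[OF Z1(3) this(2), of 0] this obtain d where "d \<in> Z" "(d,3) \<in> att3" unfolding att3_def by auto
    then have "d = 1" unfolding att3_def by auto
    then show False using cf_no[OF Z1(2), of 1 2] \<open>2 \<in> Z\<close> \<open>d \<in> Z\<close> unfolding att3_def by auto
  qed
qed

definition sig3 :: "nat set list \<Rightarrow> nat set" where
  "sig3 D = (if 3 \<in> D ! 1 then {0,1} else {0,2})"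

lemma ex3_tenable: "tenable {0..5} att3 {0}"
  unfolding tenable_def pro_wins_def
proof (intro conjI exI[of _ sig3] allI impI)
  let ?F = "{0..5::nat}"
  have cf0: "conflict_free att3 {0}" unfolding att3_def conflict_free_def by auto
  show "tenability_dispute ?F att3 [{0}]" unfolding ten_single using cf0 by auto
  fix D assume H: "tenability_dispute ?F att3 D \<and> hd D = {0} \<and> even (length D) \<and> follows sig3 D"
  have ne: "D \<noteq> []" using H unfolding tenability_dispute_def basic_dispute_def by auto
  then obtain a D' where "D = a # D'" by (cases D) auto
  moreover have "D' \<noteq> []" using H \<open>D = a # D'\<close> by auto
  then obtain b E where "D' = b # E" by (cases D') auto
  ultimately have Dab: "D = a # b # E" by simp
  have a0: "a = {0}" using H Dab by simp
  have "tenability_dispute ?F att3 ([a, b] @ E)" using H[THEN conjunct1] Dab by simp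
  then have tab: "tenability_dispute ?F att3 [a, b]" using ten_prefix by blast
  then have b1: "b \<subseteq> ?F" "conflict_free att3 b" "finite b" "strictly_cogent att3 b a"
    unfolding ten2 by auto
  have "\<exists>x\<in>b. (x,0) \<in> att3" using b1(4) a0 cf0 unfolding strictly_cogent_def cogent_def attacked_by_def att3_def
    by auto
  then have b34: "3 \<in> b \<or> 4 \<in> b" unfolding att3_def by auto
  show "tenability_dispute ?F att3 (D @ [sig3 D])"
  proof (cases E)
    case Nil
    have Dab2: "D = [a,b]" using Dab Nil by simp
    have s: "sig3 D = (if 3 \<in> b then {0,1} else {0,2})" unfolding sig3_def Dab2 by simp
    have cfs: "conflict_free att3 (sig3 D)" unfolding s att3_def conflict_free_def by auto
    have cogs: "cogent att3 (sig3 D) b"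
    proof (cases "3 \<in> b")
      case True
      have "5 \<notin> b" using cf_no[OF b1(2), of 3 5] True unfolding att3_def by auto
      then show ?thesis using cfs True unfolding s cogent_def attacked_by_def att3_def by auto
    next
      case False
      have "1 \<notin> b" using cf_no[OF b1(2), of 1 4] False b34 unfolding att3_def by auto
      then show ?thesis using cfs False unfolding s cogent_def attacked_by_def att3_def by auto
    qed
    have "{0} \<subseteq> sig3 D" "sig3 D \<subseteq> ?F" "finite (sig3 D - {0})" unfolding s by auto
    then show ?thesis unfolding Dab2 using ten3[of ?F att3 a b "sig3 D"] tab cfs cogs a0 Dab2 by simp
  next
    case (Cons c E')
    then obtain d E2 where "E' = d # E2" using H Dab by (cases E') auto
    then have Dabcd: "D = [a,b,c,d] @ E2" using Dab Cons by simp
    have t4: "tenability_dispute ?F att3 [a,b,c,d]" using ten_prefix[of ?F att3 "[a,b,c,d]" E2] H[THEN conjunct1] Dabcd by simp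
    then have d1: "b \<subseteq> d" "conflict_free att3 d" "cogent att3 d c" unfolding ten4 ten3 by auto
    have "D ! 2 = sig3 (take 2 D)" using H unfolding follows_def Dabcd by (auto dest: spec[of _ 1])
    then have cdef: "c = (if 3 \<in> b then {0,1} else {0,2})" unfolding sig3_def Dabcd by simp
    show ?thesis
    proof (cases "3 \<in> b")
      case True
      then have "1 \<in> c" "(1,3) \<in> att3" "3 \<in> d" using cdef d1 by (auto simp: att3_def)
      from cog_need[OF d1(3) this] obtain z where "z \<in> d" "(z,1) \<in> att3" by auto
      then have "z = 5" unfolding att3_def by auto
      then show ?thesis using cf_no[OF d1(2), of 3 5] \<open>3 \<in> d\<close> \<open>z \<in> d\<close> unfolding att3_def by auto
    next
      case False
      then have "2 \<in> c" "(2,4) \<in> att3" "4 \<in> d" using cdef d1 b34 by (auto simp: att3_def)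
      from cog_need[OF d1(3) this] obtain z where "z \<in> d" "(z,2) \<in> att3" by auto
      then have "z = 1" unfolding att3_def by auto
      then show ?thesis using cf_no[OF d1(2), of 1 4] \<open>4 \<in> d\<close> \<open>z \<in> d\<close> unfolding att3_def by auto
    qed
  qed
qed

theorem proposition1:
  fixes F :: "'a set" and att :: "('a \<times> 'a) set" and A :: "'a set"
  assumes "att \<subseteq> F \<times> F" and "A \<subseteq> F"
  shows "(strongly_tenable F att A \<longrightarrow> tenable F att A)
       \<and> (tenable F att A \<longrightarrow> statically_tenable F att A)
       \<and> (\<exists>(F' :: nat set) att' A'. finite F' \<and> att' \<subseteq> F' \<times> F' \<and> A' \<subseteq> F' \<and>
             tenable F' att' A' \<and> \<not> strongly_tenable F' att' A')
       \<and> (\<exists>(F' :: nat set) att' A'. finite F' \<and> att' \<subseteq> F' \<times> F' \<and> A' \<subseteq> F' \<and>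
             statically_tenable F' att' A' \<and> \<not> tenable F' att' A')"
proof (intro conjI impI)
  show "tenable F att A" if "strongly_tenable F att A" using part1 that by blast
  show "statically_tenable F att A" if "tenable F att A" using part2 that assms(2) by blast
  have a3: "att3 \<subseteq> {0..5} \<times> {0..5}" unfolding att3_def by auto
  show "\<exists>(F' :: nat set) att' A'. finite F' \<and> att' \<subseteq> F' \<times> F' \<and> A' \<subseteq> F' \<and>
             tenable F' att' A' \<and> \<not> strongly_tenable F' att' A'"
    using a3 ex3_tenable ex3_not_strong by (intro exI[of _ "{0..5}"] exI[of _ att3] exI[of _ "{0}"]) auto
  have a4: "att4 \<subseteq> {0..5} \<times> {0..5}" unfolding att4_def by auto
  show "\<exists>(F' :: nat set) att' A'. finite F' \<and> att' \<subseteq> F' \<times> F' \<and> A' \<subseteq> F' \<and>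
             statically_tenable F' att' A' \<and> \<not> tenable F' att' A'"
    using a4 ex4_static ex4_not_tenable by (intro exI[of _ "{0..5}"] exI[of _ att4] exI[of _ "{0}"]) auto
qed

end
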